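(* Let $0<t_1<t_2<t_3<t_4$ be real numbers and let $p_i=(t_i,t_i^2,t_i^3)\in\mathbb{R}^3$ for $1\le i\le 4$. Then the unique sphere in $\mathbb{R}^3$ passing through $p_1,\dots,p_4$ has the following property: for every $t\in(0,t_1)\cup(t_2,t_3)\cup(t_4,\infty)$, the point $(t,t^2,t^3)$ lies strictly outside the sphere, i.e., its distance from the center of the sphere is strictly greater than the radius.
   Context: The moment curve in $\mathbb{R}^d$ is the curve $t\mapsto(t,t^2,\dots,t^d)$ for $t>0$. *)

theory Defs
  imports "HOL-Analysis.Analysis"
begin

definition moment_curve3 :: "real \<Rightarrow> real ^ 3" where
  "moment_curve3 t = vector [t, t^2, t^3]"

end

theory Submission
  imports Defs
begin

lemma poly_id:
  fixes s1 s2 s3 s4 t :: real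
  assumes "b = 1 + s1^2 - s2"
  shows "t^2 + t^4 + t^6 - 2*(((s3 * b - s1 * s4)/2)*t + ((1 - s2 * b + s1 * s3 - s4)/2)*t^2 + ((s1 * b - s1 * s2 + s3)/2)*t^3)
     = (t^4 - s1*t^3 + s2*t^2 - s3*t + s4) * (t^2 + s1*t + b) - s4*b"
  unfolding assms by (simp add: field_simps power2_eq_square power3_eq_cube eval_nat_numeral)
lemma Pexp:
  fixes t t1 t2 t3 t4 :: real
  shows "(t-t1)*(t-t2)*(t-t3)*(t-t4) = t^4 - (t1+t2+t3+t4)*t^3 + (t1*t2+t1*t3+t1*t4+t2*t3+t2*t4+t3*t4)*t^2 - (t1*t2*t3+t1*t2*t4+t1*t3*t4+t2*t3*t4)*t + t1*t2*t3*t4"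
  by (simp add: algebra_simps power2_eq_square power3_eq_cube eval_nat_numeral)

lemma dist_mc_sq:
  "(dist c (moment_curve3 t))^2 = (c$1 - t)^2 + (c$2 - t^2)^2 + (c$3 - t^3)^2"
  unfolding dist_vec_def L2_set_def moment_curve3_def
  by (simp add: sum_3 vector_3 dist_real_def power2_abs)

lemma two_pt:
  fixes A B C D x y :: real
  assumes "A + B*x + C*x^2 + D*x^3 = 0" "A + B*y + C*y^2 + D*y^3 = 0" "x \<noteq> y"
  shows "B + C*(x+y) + D*(x^2+x*y+y^2) = 0"
proof -
  have "(x - y) * (B + C*(x+y) + D*(x^2+x*y+y^2)) = 0"
    using assms(1,2) by (simp add: algebra_simps power2_eq_square power3_eq_cube)
  thus ?thesis using assms(3) by simp
qed

lemma cubic_zero: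
  fixes A B C D a b c e :: real
  assumes "A + B*a + C*a^2 + D*a^3 = 0" "A + B*b + C*b^2 + D*b^3 = 0"
    "A + B*c + C*c^2 + D*c^3 = 0" "A + B*e + C*e^2 + D*e^3 = 0"
    "a < b" "b < c" "c < e"
  shows "A = 0 \<and> B = 0 \<and> C = 0 \<and> D = 0"
proof -
  have h1: "B + C*(a+b) + D*(a^2+a*b+b^2) = 0" using two_pt[OF assms(1,2)] assms by simp
  have h2: "B + C*(a+c) + D*(a^2+a*c+c^2) = 0" using two_pt[OF assms(1,3)] assms by simp
  have h3: "B + C*(a+e) + D*(a^2+a*e+e^2) = 0" using two_pt[OF assms(1,4)] assms by simp
  have "(b - c) * (C + D*(a+b+c)) = 0" using h1 h2 by (simp add: algebra_simps power2_eq_square)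
  hence g1: "C + D*(a+b+c) = 0" using assms by simp
  have "(b - e) * (C + D*(a+b+e)) = 0" using h1 h3 by (simp add: algebra_simps power2_eq_square)
  hence g2: "C + D*(a+b+e) = 0" using assms by simp
  have "D * (c - e) = (C + D*(a+b+c)) - (C + D*(a+b+e))" by (simp add: algebra_simps)
  hence "D * (c - e) = 0" using g1 g2 by simp
  hence D: "D = 0" using assms by simp
  hence C: "C = 0" using g1 by simp
  hence B: "B = 0" using h1 D by simp
  have "A = 0" using assms(1) B C D by simp
  thus ?thesis using B C D by simp
qed

theorem mainTheorem7:
  fixes t1 t2 t3 t4 :: real
  assumes "0 < t1" "t1 < t2" "t2 < t3" "t3 < t4"
  shows "(\<exists>!(c, r). {moment_curve3 t1, moment_curve3 t2, moment_curve3 t3, moment_curve3 t4}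
              \<subseteq> sphere (c :: real ^ 3) (r :: real))
       \<and> (\<forall>c r. {moment_curve3 t1, moment_curve3 t2, moment_curve3 t3, moment_curve3 t4}
                  \<subseteq> sphere c r \<longrightarrow>
              (\<forall>t \<in> {0<..<t1} \<union> {t2<..<t3} \<union> {t4<..}. dist c (moment_curve3 t) > r))"
proof -
  define s1 where "s1 = t1+t2+t3+t4"
  define s2 where "s2 = t1*t2+t1*t3+t1*t4+t2*t3+t2*t4+t3*t4"
  define s3 where "s3 = t1*t2*t3+t1*t2*t4+t1*t3*t4+t2*t3*t4"
  define s4 where "s4 = t1*t2*t3*t4"
  define b where "b = 1 + t1^2+t2^2+t3^2+t4^2 + s2"
  define P where "P = (\<lambda>t::real. (t-t1)*(t-t2)*(t-t3)*(t-t4))"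
  define Q where "Q = (\<lambda>t::real. t^2 + s1*t + b)"
  define c0 :: "real^3" where "c0 = vector [(s3*b - s1* s4)/2, (1 - s2*b + s1* s3 - s4)/2, (s1*b - s1* s2 + s3)/2]"
  define K where "K = (c0$1)^2 + (c0$2)^2 + (c0$3)^2 - s4*b"
  have key: "(dist c0 (moment_curve3 t))^2 = P t * Q t + K" for t
  proof -
    have bb: "b = 1 + s1^2 - s2" unfolding b_def s1_def s2_def
      by (simp add: algebra_simps power2_eq_square)
    have Pe: "P t = t^4 - s1*t^3 + s2*t^2 - s3*t + s4"
      unfolding P_def s1_def s2_def s3_def s4_def by (rule Pexp)
    have "(dist c0 (moment_curve3 t))^2 = (c0$1)^2 + (c0$2)^2 + (c0$3)^2
       + (t^2 + t^4 + t^6 - 2*((c0$1)*t + (c0$2)*t^2 + (c0$3)*t^3))"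
      unfolding dist_mc_sq by (simp add: algebra_simps power2_eq_square power3_eq_cube eval_nat_numeral)
    also have "t^2 + t^4 + t^6 - 2*((c0$1)*t + (c0$2)*t^2 + (c0$3)*t^3) = P t * Q t - s4*b"
      unfolding c0_def vector_3 Pe Q_def by (rule poly_id[OF bb])
    finally show ?thesis unfolding K_def by simp
  qed
  define r0 where "r0 = dist c0 (moment_curve3 t1)"
  let ?X = "{moment_curve3 t1, moment_curve3 t2, moment_curve3 t3, moment_curve3 t4}"
  have Pz: "P t1 = 0" "P t2 = 0" "P t3 = 0" "P t4 = 0" unfolding P_def by simp_all
  have onsph: "dist c0 (moment_curve3 ti) = r0" if "ti \<in> {t1,t2,t3,t4}" for ti
  proof -
    have "(dist c0 (moment_curve3 ti))^2 = r0^2"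
      using that key[of ti] key[of t1] Pz unfolding r0_def by auto
    thus ?thesis unfolding r0_def by (simp add: power2_eq_iff_nonneg)
  qed
  have ex: "?X \<subseteq> sphere c0 r0" using onsph by (auto simp: sphere_def dist_commute)
  have uniq: "c = c0 \<and> r = r0" if "?X \<subseteq> sphere c r" for c r
  proof -
    have d: "dist c (moment_curve3 ti) = r" if "ti \<in> {t1,t2,t3,t4}" for ti
      using \<open>?X \<subseteq> sphere c r\<close> that by (auto simp: sphere_def dist_commute)
    have r0: "r \<ge> 0" using d[of t1] by (metis insertI1 zero_le_dist)
    define A where "A = ((c$1)^2 + (c$2)^2 + (c$3)^2 - r^2) - ((c0$1)^2 + (c0$2)^2 + (c0$3)^2 - r0^2)"
    have eq: "A + (-2*(c$1 - c0$1))*ti + (-2*(c$2 - c0$2))*ti^2 + (-2*(c$3 - c0$3))*ti^3 = 0"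
      if "ti \<in> {t1,t2,t3,t4}" for ti
    proof -
      have "(dist c (moment_curve3 ti))^2 = r^2" using d[OF that] by simp
      moreover have "(dist c0 (moment_curve3 ti))^2 = r0^2" using onsph[OF that] by simp
      ultimately show ?thesis unfolding dist_mc_sq A_def
        by (simp add: algebra_simps power2_eq_square power3_eq_cube)
    qed
    have z: "A = 0 \<and> -2*(c$1 - c0$1) = 0 \<and> -2*(c$2 - c0$2) = 0 \<and> -2*(c$3 - c0$3) = 0"
      using cubic_zero[OF eq[of t1] eq[of t2] eq[of t3] eq[of t4]] assms by simp
    have cc: "c = c0" using z by (simp add: vec_eq_iff forall_3)
    have "r^2 = r0^2" using z cc unfolding A_def by simp
    hence "r = r0" using r0 unfolding r0_def by (simp add: power2_eq_iff_nonneg)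
    thus ?thesis using cc by simp
  qed
  have part1: "\<exists>!(c, r). ?X \<subseteq> sphere (c :: real ^ 3) (r :: real)"
  proof (rule ex1I[of _ "(c0, r0)"])
    show "case (c0, r0) of (c, r) \<Rightarrow> ?X \<subseteq> sphere c r" using ex by simp
  next
    fix y assume "case y of (c, r) \<Rightarrow> ?X \<subseteq> sphere c r"
    thus "y = (c0, r0)" using uniq by (cases y) auto
  qed
  have part2: "dist c (moment_curve3 t) > r"
    if "?X \<subseteq> sphere c r" "t \<in> {0<..<t1} \<union> {t2<..<t3} \<union> {t4<..}" for c r t
  proof -
    have cr: "c = c0" "r = r0" using uniq[OF that(1)] by auto
    have tpos: "t > 0" using that(2) assms by auto
    have bpos: "b > 0" unfolding b_def s2_def using assms by (simp add: add_pos_nonneg)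
    have Qpos: "Q t > 0" unfolding Q_def s1_def using tpos bpos assms
      by (simp add: add_pos_pos)
    have X: "(t-t1)*(t-t2) > 0" using that(2) assms
      by (auto intro: mult_pos_pos mult_neg_neg)
    have Y: "(t-t3)*(t-t4) > 0" using that(2) assms
      by (auto intro: mult_pos_pos mult_neg_neg)
    have Ppos: "P t > 0" unfolding P_def using mult_pos_pos[OF X Y] by (simp add: mult.assoc)
    have "(dist c0 (moment_curve3 t))^2 > r0^2"
      using key[of t] key[of t1] Pz Ppos Qpos unfolding r0_def by simp
    thus ?thesis using cr unfolding r0_def
      by (metis power_mono zero_le_dist not_le)
  qed
  show ?thesis using part1 part2 by blast
qed

end
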